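(* Under the rank assumptions stated in the context, let $S_{jk}:=\{y+s v_j+t v_k: y\in \mathrm{relint}(F_{jk}), s> 0, t> 0\}$ for $1\leq j< k\leq d$ such that $F_{jk}$ is a facet of $F_j$. Then $S_{jk}\cap S_{j'k'}=\emptyset$ for any $\{ j,k \}\neq \{ j',k' \}$.
   Context: Let $d\geq 3$, let $v_1,\dots,v_d\in\mathbb{R}^d$ be distinct unit vectors and $b_1,\dots,b_d$ real numbers, and let $A=\{x\in \mathbb{R}^d:\ x\cdot v_j\leq b_j\ \text{for}\ j=1,\dots, d\}$ be a (possibly unbounded) convex polytope. For each $j$, $F_j$ denotes the (possible) facet of $A$ corresponding to $v_j$ (the part of $A$ on the hyperplane $\{x: x\cdot v_j=b_j\}$), and $F_{jk}=F_{kj}$ denotes the facet of the $(d-1)$-dimensional polytope $F_j$ created by intersecting with $F_k$, $k\neq j$; $\mathrm{relint}$ denotes relative interior. The following rank assumptions are imposed: for any $1\leq j<k\leq d$, if $\operatorname{rank} \begin{bmatrix} v_j & v_k \end{bmatrix}<2$, then $\operatorname{rank} \begin{bmatrix} v_j & v_k\end{bmatrix}<\operatorname{rank} \begin{bmatrix} v_j & v_k\\ b_j&b_k \end{bmatrix}$; for any $1\leq j<k<l\leq d$, if $\operatorname{rank} \begin{bmatrix} v_j & v_k & v_l\end{bmatrix}<3$, then $\operatorname{rank} \begin{bmatrix} v_j & v_k & v_l\end{bmatrix}<\operatorname{rank} \begin{bmatrix} v_j & v_k & v_l\\ b_j&b_k&b_l \end{bmatrix}$; for any $1\leq j<k<l<s\leq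 d$, if $\operatorname{rank} \begin{bmatrix} v_j & v_k & v_l& v_s\end{bmatrix}<4$, then $\operatorname{rank} \begin{bmatrix} v_j & v_k & v_l& v_s\end{bmatrix}<\operatorname{rank} \begin{bmatrix} v_j & v_k & v_l& v_s\\ b_j&b_k&b_l&b_s \end{bmatrix}$. *)

theory Defs
  imports "HOL-Analysis.Analysis"
begin

definition polyA :: "nat \<Rightarrow> (nat \<Rightarrow> real^'n) \<Rightarrow> (nat \<Rightarrow> real) \<Rightarrow> (real^'n) set" where
  "polyA d v b = {x. \<forall>j\<in>{1..d}. x \<bullet> v j \<le> b j}"

definition faceF :: "nat \<Rightarrow> (nat \<Rightarrow> real^'n) \<Rightarrow> (nat \<Rightarrow> real) \<Rightarrow> nat \<Rightarrow> (real^'n) set" where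
  "faceF d v b j = polyA d v b \<inter> {x. x \<bullet> v j = b j}"

definition faceF2 :: "nat \<Rightarrow> (nat \<Rightarrow> real^'n) \<Rightarrow> (nat \<Rightarrow> real) \<Rightarrow> nat \<Rightarrow> nat \<Rightarrow> (real^'n) set" where
  "faceF2 d v b j k = faceF d v b j \<inter> faceF d v b k"

definition wedgeS :: "nat \<Rightarrow> (nat \<Rightarrow> real^'n) \<Rightarrow> (nat \<Rightarrow> real) \<Rightarrow> nat \<Rightarrow> nat \<Rightarrow> (real^'n) set" where
  "wedgeS d v b j k = {y + s *\<^sub>R v j + t *\<^sub>R v k | y s t.
      y \<in> rel_interior (faceF2 d v b j k) \<and> s > 0 \<and> t > 0}"

text \<open>Rank of the matrix with columns v_i (i \<in> I) is dim of the set of columns;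
  the augmented matrix has columns (v_i, b_i) \<in> R^d \<times> R = R^(d+1).\<close>
definition rank_cols :: "(nat \<Rightarrow> real^'n) \<Rightarrow> nat set \<Rightarrow> nat" where
  "rank_cols v I = dim (v ` I)"

definition rank_aug :: "(nat \<Rightarrow> real^'n) \<Rightarrow> (nat \<Rightarrow> real) \<Rightarrow> nat set \<Rightarrow> nat" where
  "rank_aug v b I = dim ((\<lambda>i. (v i, b i)) ` I)"

definition rank_assumptions :: "nat \<Rightarrow> (nat \<Rightarrow> real^'n) \<Rightarrow> (nat \<Rightarrow> real) \<Rightarrow> bool" where
  "rank_assumptions d v b \<longleftrightarrow>
     (\<forall>j k. 1 \<le> j \<and> j < k \<and> k \<le> d \<longrightarrow>
        rank_cols v {j,k} < 2 \<longrightarrow> rank_cols v {j,k} < rank_aug v b {j,k}) \<and>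
     (\<forall>j k l. 1 \<le> j \<and> j < k \<and> k < l \<and> l \<le> d \<longrightarrow>
        rank_cols v {j,k,l} < 3 \<longrightarrow> rank_cols v {j,k,l} < rank_aug v b {j,k,l}) \<and>
     (\<forall>j k l s. 1 \<le> j \<and> j < k \<and> k < l \<and> l < s \<and> s \<le> d \<longrightarrow>
        rank_cols v {j,k,l,s} < 4 \<longrightarrow> rank_cols v {j,k,l,s} < rank_aug v b {j,k,l,s})"

end

theory Submission imports Defs begin

lemma sorted3:
  fixes I :: "nat set"
  assumes "finite I" "card I = 3"
  shows "\<exists>a b c. a < b \<and> b < c \<and> I = {a,b,c}"
proof -
  define xs where "xs = sorted_list_of_set I"
  have l: "length xs = 3" using assms by (simp add: xs_def)
  then obtain a b c where xs: "xs = [a,b,c]"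
    by (auto simp: numeral_3_eq_3 length_Suc_conv)
  have "sorted_wrt (<) xs" by (simp add: xs_def)
  moreover have "set xs = I" using assms by (simp add: xs_def)
  ultimately show ?thesis using xs by auto
qed

lemma sorted4:
  fixes I :: "nat set"
  assumes "finite I" "card I = 4"
  shows "\<exists>a b c e. a < b \<and> b < c \<and> c < e \<and> I = {a,b,c,e}"
proof -
  define xs where "xs = sorted_list_of_set I"
  have l: "length xs = 4" using assms by (simp add: xs_def)
  then obtain a b c e where xs: "xs = [a,b,c,e]"
    by (auto simp: numeral_eq_Suc length_Suc_conv)
  have "sorted_wrt (<) xs" by (simp add: xs_def)
  moreover have "set xs = I" using assms by (simp add: xs_def)
  ultimately show ?thesis using xs by auto
qed

lemma rank_gen:
  assumes "rank_assumptions d v b" "I \<subseteq> {1..d}" "card I = 3 \<or> card I = 4"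
    "rank_cols v I < card I"
  shows "rank_cols v I < rank_aug v b I"
proof -
  have fin: "finite I" using assms(2) finite_subset by blast
  from assms(3) show ?thesis
  proof
    assume c: "card I = 3"
    then obtain a b' c where abc: "a < b'" "b' < c" "I = {a,b',c}" using sorted3 fin by blast
    then have "1 \<le> a" "c \<le> d" using assms(2) by auto
    then have "rank_cols v {a,b',c} < 3 \<longrightarrow> rank_cols v {a,b',c} < rank_aug v b {a,b',c}"
      using assms(1) abc unfolding rank_assumptions_def by simp
    then show ?thesis using assms(4) abc c by simp
  next
    assume c: "card I = 4"
    then obtain a b' c e where abc: "a < b'" "b' < c" "c < e" "I = {a,b',c,e}" using sorted4 fin by blast
    then have "1 \<le> a" "e \<le> d" using assms(2) by auto
    then have "rank_cols v {a,b',c,e} < 4 \<longrightarrow> rank_cols v {a,b',c,e} < rank_aug v b {a,b',c,e}"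
      using assms(1) abc unfolding rank_assumptions_def by simp
    then show ?thesis using assms(4) abc c by simp
  qed
qed

lemma aug_le:
  fixes v :: "nat \<Rightarrow> real^'n"
  assumes "\<forall>i\<in>I. b i = v i \<bullet> y"
  shows "rank_aug v b I \<le> rank_cols v I"
proof -
  define f where "f = (\<lambda>z::real^'n. (z, z \<bullet> y))"
  have lin: "linear f" unfolding f_def
    by (intro bounded_linear.linear bounded_linear_Pair bounded_linear_ident bounded_linear_inner_left)
  have "(\<lambda>i. (v i, b i)) ` I = f ` (v ` I)" using assms by (force simp: f_def image_image)
  then show ?thesis unfolding rank_aug_def rank_cols_def using dim_image_le[OF lin] by simp
qed

lemma dep_rank:
  fixes v :: "nat \<Rightarrow> real^'n"
  assumes "finite I" "inj_on v I" "(\<Sum>i\<in>I. c i *\<^sub>R v i) = 0" "i0 \<in> I" "c i0 \<noteq> 0"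
  shows "rank_cols v I < card I"
proof -
  have fin: "finite (v ` I)" using assms(1) by simp
  have dep: "dependent (v ` I)"
    unfolding dependent_finite[OF fin]
  proof (intro exI conjI)
    let ?u = "\<lambda>w. c (the_inv_into I v w)"
    show "\<exists>w\<in>v ` I. ?u w \<noteq> 0" using assms(2,4,5) by (auto simp: the_inv_into_f_f)
    have "(\<Sum>w\<in>v ` I. ?u w *\<^sub>R w) = (\<Sum>i\<in>I. ?u (v i) *\<^sub>R v i)"
      using assms(2) by (simp add: sum.reindex)
    also have "\<dots> = (\<Sum>i\<in>I. c i *\<^sub>R v i)"
      using assms(2) by (intro sum.cong) (auto simp: the_inv_into_f_f)
    finally show "(\<Sum>w\<in>v ` I. ?u w *\<^sub>R w) = 0" using assms(3) by simp
  qed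
  have "dim (v ` I) \<le> card (v ` I)" using dim_le_card'[OF fin] .
  moreover have "dim (v ` I) \<noteq> card (v ` I)"
  proof
    assume "dim (v ` I) = card (v ` I)"
    then have "independent (v ` I)" using card_eq_dim[of "v ` I" "v ` I"] fin span_superset
      by (metis order_refl)
    then show False using dep by simp
  qed
  ultimately show ?thesis unfolding rank_cols_def using card_image[OF assms(2)] by simp
qed


lemma scaleR_if0: "(if P then x else 0) *\<^sub>R (w::'a::real_vector) = (if P then x *\<^sub>R w else 0)"
  by simp

theorem lemma6p3:
  fixes v :: "nat \<Rightarrow> real^'n" and b :: "nat \<Rightarrow> real" and d :: nat
  assumes "d = CARD('n)" and "d \<ge> 3"
    and "inj_on v {1..d}"
    and "\<forall>j\<in>{1..d}. norm (v j) = 1"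
    and "rank_assumptions d v b"
    and "1 \<le> j" "j < k" "k \<le> d"
    and "faceF d v b j facet_of polyA d v b"
    and "faceF2 d v b j k facet_of faceF d v b j"
    and "1 \<le> j'" "j' < k'" "k' \<le> d"
    and "faceF d v b j' facet_of polyA d v b"
    and "faceF2 d v b j' k' facet_of faceF d v b j'"
    and "{j, k} \<noteq> {j', k'}"
  shows "wedgeS d v b j k \<inter> wedgeS d v b j' k' = {}"
proof (rule ccontr)
  assume "wedgeS d v b j k \<inter> wedgeS d v b j' k' \<noteq> {}"
  then obtain p where p1: "p \<in> wedgeS d v b j k" and p2: "p \<in> wedgeS d v b j' k'" by blast
  from p1 obtain y s t where y: "y \<in> rel_interior (faceF2 d v b j k)" "s > 0" "t > 0"
    "p = y + s *\<^sub>R v j + t *\<^sub>R v k" unfolding wedgeS_def by blast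
  from p2 obtain y' s' t' where y': "y' \<in> rel_interior (faceF2 d v b j' k')" "s' > 0" "t' > 0"
    "p = y' + s' *\<^sub>R v j' + t' *\<^sub>R v k'" unfolding wedgeS_def by blast
  have yF: "y \<in> faceF2 d v b j k" using y(1) rel_interior_subset by blast
  have y'F: "y' \<in> faceF2 d v b j' k'" using y'(1) rel_interior_subset by blast
  have yA: "\<forall>i\<in>{1..d}. y \<bullet> v i \<le> b i" "y \<bullet> v j = b j" "y \<bullet> v k = b k"
    using yF unfolding faceF2_def faceF_def polyA_def by auto
  have y'A: "\<forall>i\<in>{1..d}. y' \<bullet> v i \<le> b i" "y' \<bullet> v j' = b j'" "y' \<bullet> v k' = b k'"
    using y'F unfolding faceF2_def faceF_def polyA_def by auto
  have idx: "j \<in> {1..d}" "k \<in> {1..d}" "j' \<in> {1..d}" "k' \<in> {1..d}" using assms by auto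
  have e1: "(p - y) \<bullet> (y' - y) = s * (y' \<bullet> v j - b j) + t * (y' \<bullet> v k - b k)"
    using y(4) yA by (simp add: algebra_simps inner_add_left inner_diff_right inner_commute)
  have e1': "(p - y) \<bullet> (y' - y) \<le> 0"
    unfolding e1 using y(2,3) y'A(1) idx
    by (intro add_nonpos_nonpos mult_nonneg_nonpos) auto
  have e2: "(p - y') \<bullet> (y - y') = s' * (y \<bullet> v j' - b j') + t' * (y \<bullet> v k' - b k')"
    using y'(4) y'A by (simp add: algebra_simps inner_add_left inner_diff_right inner_commute)
  have e2': "(p - y') \<bullet> (y - y') \<le> 0"
    unfolding e2 using y'(2,3) yA(1) idx
    by (intro add_nonpos_nonpos mult_nonneg_nonpos) auto
  have "(y' - y) \<bullet> (y' - y) = (p - y) \<bullet> (y' - y) + (p - y') \<bullet> (y - y')"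
    by (simp add: algebra_simps inner_diff_left inner_diff_right inner_commute)
  then have "(y' - y) \<bullet> (y' - y) \<le> 0" using e1' e2' by linarith
  then have yy: "y' = y" by (metis inner_ge_zero inner_eq_zero_iff order_antisym right_minus_eq)
  have lin: "s *\<^sub>R v j + t *\<^sub>R v k - s' *\<^sub>R v j' - t' *\<^sub>R v k' = 0"
    using y(4) y'(4) yy by (simp add: algebra_simps)
  define I where "I = {j, k, j', k'}"
  define c where "c i = (if i = j then s else 0) + (if i = k then t else 0)
      - (if i = j' then s' else 0) - (if i = k' then t' else 0)" for i
  have finI: "finite I" unfolding I_def by simp
  have sumc: "(\<Sum>i\<in>I. c i *\<^sub>R v i) = 0"
  proof -
    have "(\<Sum>i\<in>I. c i *\<^sub>R v i) = s *\<^sub>R v j + t *\<^sub>R v k - s' *\<^sub>R v j' - t' *\<^sub>R v k'"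
      unfolding c_def using finI
      by (simp add: scaleR_add_left scaleR_diff_left sum.distrib sum_subtractf scaleR_if0 I_def)
    then show ?thesis using lin by simp
  qed
  have "\<exists>i0\<in>I. c i0 \<noteq> 0"
  proof (cases "j \<in> {j', k'} \<and> k \<in> {j', k'}")
    case True
    then have "j' \<notin> {j, k} \<or> k' \<notin> {j, k}" using assms(7,12,16) by auto
    then show ?thesis using y'(2,3) assms(7,12) unfolding c_def I_def by auto
  next
    case False
    then show ?thesis using y(2,3) assms(7,12) unfolding c_def I_def by auto
  qed
  then obtain i0 where i0: "i0 \<in> I" "c i0 \<noteq> 0" by blast
  have IS: "I \<subseteq> {1..d}" using idx unfolding I_def by auto
  have inj: "inj_on v I" using inj_on_subset[OF assms(3) IS] .
  have r1: "rank_cols v I < card I" using dep_rank[OF finI inj sumc i0] .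
  have "{j, k} \<subset> I"
  proof -
    have "\<not> {j', k'} \<subseteq> {j, k}" using assms(7,12,16) by auto
    then show ?thesis unfolding I_def by auto
  qed
  then have "card {j, k} < card I" using finI psubset_card_mono by blast
  then have c3: "card I \<ge> 3" using assms(7) by simp
  have c4: "card I \<le> 4"
  proof -
    have "I = set [j, k, j', k']" unfolding I_def by simp
    then show ?thesis using card_length[of "[j, k, j', k']"] by simp
  qed
  have "card I = 3 \<or> card I = 4" using c3 c4 by linarith
  then have r2: "rank_cols v I < rank_aug v b I" using rank_gen[OF assms(5) IS _ r1] by blast
  have "\<forall>i\<in>I. b i = v i \<bullet> y" using yA y'A yy unfolding I_def by (auto simp: inner_commute)
  then have "rank_aug v b I \<le> rank_cols v I" by (rule aug_le)
  then show False using r2 by simp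
qed

end
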